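(* Let $W$ be a finite Weyl group with set $R$ of simple reflections, and for $r\in R$ let $\alpha_r$ be the corresponding simple root. Let $\tilde W=W\ltimes Z$ be the affine Weyl group. Suppose $a\in W_I$ for some $I\subseteq R$. If $(a,\mathbf u)\in\tilde W$ is an involution, with $\mathbf u=\sum_{r\in R}u_r\alpha_r$, then $a$ is an involution and $u_r=0$ whenever $r\notin I$. Moreover, let $J$ be the set of reflections $s\in R$ that commute with all $r\in I$. If $\mathbf v=\sum_{s\in J}v_s\alpha_s$, then $\mathbf v^b=\mathbf v$ for all $b\in W_I$.
   Context: $W$ has root system $\Phi$ in a Euclidean space $V$; $\alpha^\vee=2\alpha/\langle\alpha,\alpha\rangle$; $Z$ is the coroot lattice $L(\Phi^\vee)$ viewed as translations. $\tilde W$ consists of pairs $(a,\mathbf u)$, $a\in W$, $\mathbf u\in Z$, with multiplication $(a,\mathbf u)(b,\mathbf v)=(ab,\mathbf u^b+\mathbf v)$, where $\mathbf u\mapsto\mathbf u^b$ is the (right) linear action of $W$ on $V$, so that $\mathbf v^r=\mathbf v-\langle\mathbf v,\alpha_r\rangle\alpha_r^\vee$ for $r\in R$. $W_I$ is the standard parabolic subgroup generated by $I$. The coefficients $u_r,v_s$ are real numbers. *)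

theory Defs
  imports "HOL-Analysis.Analysis"
begin

(* V is modelled by a Euclidean space type 'a. *)

definition coroot :: "'a::euclidean_space \<Rightarrow> 'a" where
  "coroot \<alpha> = (2 / (\<alpha> \<bullet> \<alpha>)) *\<^sub>R \<alpha>"

definition refl :: "'a::euclidean_space \<Rightarrow> 'a \<Rightarrow> 'a" where
  "refl \<alpha> v = v - (v \<bullet> \<alpha>) *\<^sub>R coroot \<alpha>"

definition root_system :: "'a::euclidean_space set \<Rightarrow> bool" where
  "root_system \<Phi> \<longleftrightarrow> finite \<Phi> \<and> 0 \<notin> \<Phi>
     \<and> (\<forall>\<alpha>\<in>\<Phi>. \<forall>\<beta>\<in>\<Phi>. refl \<alpha> \<beta> \<in> \<Phi>)
     \<and> (\<forall>\<alpha>\<in>\<Phi>. \<forall>\<beta>\<in>\<Phi>. \<beta> \<bullet> coroot \<alpha> \<in> \<int>)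
     \<and> (\<forall>\<alpha>\<in>\<Phi>. \<forall>c. c *\<^sub>R \<alpha> \<in> \<Phi> \<longrightarrow> c = 1 \<or> c = -1)"

definition simple_system :: "'a::euclidean_space set \<Rightarrow> 'a set \<Rightarrow> bool" where
  "simple_system \<Phi> \<Delta> \<longleftrightarrow> \<Delta> \<subseteq> \<Phi> \<and> independent \<Delta>
     \<and> (\<forall>\<beta>\<in>\<Phi>. \<exists>c. \<beta> = (\<Sum>\<alpha>\<in>\<Delta>. c \<alpha> *\<^sub>R \<alpha>)
            \<and> ((\<forall>\<alpha>\<in>\<Delta>. c \<alpha> \<ge> (0::real)) \<or> (\<forall>\<alpha>\<in>\<Delta>. c \<alpha> \<le> 0)))"

(* With S = \<Delta> this is W; with S = I \<subseteq> \<Delta> it is the standard parabolic W_I.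
   (Simple reflections are involutions, so closure under composition suffices.) *)
inductive_set gen_group :: "'a::euclidean_space set \<Rightarrow> ('a \<Rightarrow> 'a) set" for S where
  gen_id: "id \<in> gen_group S"
| gen_step: "\<alpha> \<in> S \<Longrightarrow> w \<in> gen_group S \<Longrightarrow> (refl \<alpha> \<circ> w) \<in> gen_group S"

(* Product in W written so that the action u \<mapsto> u^a = a u is a right action:
   u^(ab) = (u^a)^b, i.e.  ab = b \<circ> a as maps. *)
definition wmult :: "('a \<Rightarrow> 'a) \<Rightarrow> ('a \<Rightarrow> 'a) \<Rightarrow> ('a \<Rightarrow> 'a)" where
  "wmult a b = b \<circ> a"

definition w_involution :: "('a \<Rightarrow> 'a) \<Rightarrow> bool" where
  "w_involution a \<longleftrightarrow> wmult a a = id \<and> a \<noteq> id"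

definition coroot_lattice :: "'a::euclidean_space set \<Rightarrow> 'a set" where
  "coroot_lattice \<Phi> = {u. \<exists>c::'a \<Rightarrow> int. u = (\<Sum>\<alpha>\<in>\<Phi>. of_int (c \<alpha>) *\<^sub>R coroot \<alpha>)}"

definition affine_weyl :: "'a::euclidean_space set \<Rightarrow> 'a set \<Rightarrow> (('a \<Rightarrow> 'a) \<times> 'a) set" where
  "affine_weyl \<Phi> \<Delta> = gen_group \<Delta> \<times> coroot_lattice \<Phi>"

definition aff_mult :: "(('a::euclidean_space \<Rightarrow> 'a) \<times> 'a) \<Rightarrow> (('a \<Rightarrow> 'a) \<times> 'a) \<Rightarrow> (('a \<Rightarrow> 'a) \<times> 'a)" where
  "aff_mult x y = (wmult (fst x) (fst y), fst y (snd x) + snd y)"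

definition aff_involution :: "(('a::euclidean_space \<Rightarrow> 'a) \<times> 'a) \<Rightarrow> bool" where
  "aff_involution x \<longleftrightarrow> aff_mult x x = (id, 0) \<and> x \<noteq> (id, 0)"

definition commuting_set :: "'a::euclidean_space set \<Rightarrow> 'a set \<Rightarrow> 'a set" where
  "commuting_set \<Delta> I = {s \<in> \<Delta> - I. \<forall>r\<in>I. refl s \<circ> refl r = refl r \<circ> refl s}"

end

theory Submission
  imports Defs
begin

lemma refl_comm_orth:
  fixes r s :: "'a::euclidean_space"
  assumes "r \<noteq> 0" "s \<noteq> 0" "refl s \<circ> refl r = refl r \<circ> refl s" "s \<bullet> r \<noteq> 0"
  shows "r \<in> span {s}"
proof -
  define k where "k = 2 / (r \<bullet> r)"
  have k: "k \<noteq> 0" using assms(1) by (simp add: k_def)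
  have ss: "(2 / (s \<bullet> s)) * (s \<bullet> s) = 2" using assms(2) by simp
  have E: "refl s (refl r s) = refl r (refl s s)" using assms(3) by (metis comp_apply)
  have rs: "refl s s = - s" using ss assms(2) by (simp add: refl_def coroot_def algebra_simps scaleR_2)
  have h1: "refl r s = s - (k * (s \<bullet> r)) *\<^sub>R r" by (simp add: refl_def coroot_def k_def)
  have h2: "refl r (- s) = - s + (k * (s \<bullet> r)) *\<^sub>R r" by (simp add: refl_def coroot_def k_def)
  have E2: "refl s (s - (k * (s \<bullet> r)) *\<^sub>R r) = - s + (k * (s \<bullet> r)) *\<^sub>R r"
    using E rs h1 h2 by simp
  define c where "c = k * (s \<bullet> r)"
  define X where "X = (s - c *\<^sub>R r) \<bullet> s * (2 / (s \<bullet> s))"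
  have "s - c *\<^sub>R r - X *\<^sub>R s = - s + c *\<^sub>R r"
    using E2 by (simp add: refl_def coroot_def X_def c_def)
  then have "(2 - X) *\<^sub>R s = (2 * c) *\<^sub>R r"
    proof -
    have "(2 - X) *\<^sub>R s - (2 * c) *\<^sub>R r = (s - c *\<^sub>R r - X *\<^sub>R s) - (- s + c *\<^sub>R r)"
      by (simp add: algebra_simps scaleR_2 flip: scaleR_scaleR)
    with \<open>s - c *\<^sub>R r - X *\<^sub>R s = - s + c *\<^sub>R r\<close> show ?thesis by simp
  qed
  then have "(2 * k * (s \<bullet> r)) *\<^sub>R r = (2 - X) *\<^sub>R s" by (simp add: c_def mult.assoc)
  then have "r = (inverse (2 * k * (s \<bullet> r)) * (2 - X)) *\<^sub>R s"
    using k assms(4) by (metis (no_types, lifting) divideR_right inverse_eq_divide mult_eq_0_iff scaleR_scaleR zero_neq_numeral)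
  then show ?thesis by (metis span_base span_mul singletonI)
qed

lemma gen_group_span:
  "w \<in> gen_group S \<Longrightarrow> w v - v \<in> span S"
proof (induction w rule: gen_group.induct)
  case gen_id then show ?case by (simp add: span_zero)
next
  case (gen_step \<alpha> w)
  have "refl \<alpha> (w v) - w v \<in> span S"
    using gen_step(1) by (simp add: refl_def coroot_def span_mul span_base span_neg span_zero)
  then have "(refl \<alpha> (w v) - w v) + (w v - v) \<in> span S" using gen_step(3) by (rule span_add)
  then show ?case by simp
qed

lemma gen_group_fix:
  "w \<in> gen_group S \<Longrightarrow> (\<forall>r\<in>S. v \<bullet> r = 0) \<Longrightarrow> w v = v"
proof (induction w rule: gen_group.induct)
  case gen_id then show ?case by simp
next
  case (gen_step \<alpha> w)
  then show ?case by (simp add: refl_def)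
qed

theorem lemma2p8:
  fixes \<Phi> \<Delta> I :: "'a::euclidean_space set"
    and a :: "'a \<Rightarrow> 'a" and u :: 'a and uc :: "'a \<Rightarrow> real"
  assumes "root_system \<Phi>" and "simple_system \<Phi> \<Delta>"
    and "I \<subseteq> \<Delta>" and "a \<in> gen_group I"
    and "(a, u) \<in> affine_weyl \<Phi> \<Delta>" and "aff_involution (a, u)"
    and "u = (\<Sum>r\<in>\<Delta>. uc r *\<^sub>R r)"
  shows "w_involution a \<and> (\<forall>r\<in>\<Delta> - I. uc r = 0)
    \<and> (\<forall>vc :: 'a \<Rightarrow> real. \<forall>b\<in>gen_group I.
          b (\<Sum>s\<in>commuting_set \<Delta> I. vc s *\<^sub>R s) = (\<Sum>s\<in>commuting_set \<Delta> I. vc s *\<^sub>R s))"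
proof -
  have ind: "independent \<Delta>" and sub: "\<Delta> \<subseteq> \<Phi>" using assms(2) by (auto simp: simple_system_def)
  have z: "0 \<notin> \<Phi>" using assms(1) by (simp add: root_system_def)
  have fin: "finite \<Delta>" using independent_bound ind by blast
  have finI: "finite I" using fin assms(3) finite_subset by blast
  have aa: "a \<circ> a = id" and au: "a u + u = 0" and ne: "(a, u) \<noteq> (id, 0)"
    using assms(6) by (auto simp: aff_involution_def aff_mult_def wmult_def)
  have inv: "w_involution a"
  proof -
    have "a \<noteq> id"
    proof
      assume "a = id"
      then have "u = 0" using au by (metis id_apply scaleR_2 scaleR_eq_0_iff zero_neq_numeral)
      then show False using ne \<open>a = id\<close> by simp
    qed
    then show ?thesis using aa by (simp add: w_involution_def wmult_def)
  qed
  have "a u - u \<in> span I" using gen_group_span[OF assms(4)] .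
  moreover have "a u - u = (-2) *\<^sub>R u"
  proof -
    have "a u = - u" using au by (simp add: eq_neg_iff_add_eq_0)
    then show ?thesis by (simp add: scaleR_2)
  qed
  ultimately have "(-2) *\<^sub>R u \<in> span I" by simp
  then have "(-1/2) *\<^sub>R ((-2) *\<^sub>R u) \<in> span I" by (rule span_mul)
  then have "u \<in> span I" by simp
  then obtain c where c: "u = (\<Sum>v\<in>I. c v *\<^sub>R v)" using span_finite[OF finI] by auto
  define d where "d v = (if v \<in> I then c v else 0)" for v
  have "(\<Sum>v\<in>I. c v *\<^sub>R v) = (\<Sum>v\<in>\<Delta>. d v *\<^sub>R v)"
    unfolding d_def by (rule sum.mono_neutral_cong_left) (use fin assms(3) in auto)
  then have "(\<Sum>v\<in>\<Delta>. (uc v - d v) *\<^sub>R v) = 0"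
    using c assms(7) by (simp add: scaleR_diff_left sum_subtractf)
  then have zero: "\<forall>v\<in>\<Delta>. uc v - d v = 0" using independent_explicit[THEN iffD1, OF ind, THEN conjunct2, rule_format, of "\<lambda>v. uc v - d v"] by blast
  have part2: "\<forall>r\<in>\<Delta> - I. uc r = 0"
    using zero by (auto simp: d_def)
  have orth: "s \<bullet> r = 0" if s: "s \<in> commuting_set \<Delta> I" and r: "r \<in> I" for s r
  proof (rule ccontr)
    assume h: "s \<bullet> r \<noteq> 0"
    have sD: "s \<in> \<Delta>" "s \<notin> I" and cm: "refl s \<circ> refl r = refl r \<circ> refl s"
      using s r by (auto simp: commuting_set_def)
    have rD: "r \<in> \<Delta>" using r assms(3) by auto
    have "r \<noteq> 0" "s \<noteq> 0" using rD sD z sub by auto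
    then have "r \<in> span {s}" by (rule refl_comm_orth[OF _ _ cm h])
    moreover have "{s} \<subseteq> \<Delta> - {r}" using sD r by auto
    ultimately have "r \<in> span (\<Delta> - {r})" using span_mono[of "{s}" "\<Delta> - {r}"] by blast
    then have "dependent \<Delta>" using rD unfolding dependent_def by blast
    then show False using ind by simp
  qed
  have part3: "\<forall>vc :: 'a \<Rightarrow> real. \<forall>b\<in>gen_group I.
          b (\<Sum>s\<in>commuting_set \<Delta> I. vc s *\<^sub>R s) = (\<Sum>s\<in>commuting_set \<Delta> I. vc s *\<^sub>R s)"
  proof (intro allI ballI)
    fix vc :: "'a \<Rightarrow> real" and b assume b: "b \<in> gen_group I"
    show "b (\<Sum>s\<in>commuting_set \<Delta> I. vc s *\<^sub>R s) = (\<Sum>s\<in>commuting_set \<Delta> I. vc s *\<^sub>R s)"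
      by (rule gen_group_fix[OF b]) (simp add: inner_sum_left orth)
  qed
  show ?thesis using inv part2 part3 by blast
qed

end
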